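(* Let $L_1,L_2,L_3$ be three lines in $\mathbb{R}^2$ and let $\Delta$ be a (2-dimensional) cell of their arrangement, i.e. a connected component of $\mathbb{R}^2\setminus(L_1\cup L_2\cup L_3)$. For $i=1,2,3$ let $L_i^-$ and $L_i^+$ be the two open halfplanes of $\mathbb{R}^2\setminus L_i$, labeled so that $\Delta\subset L_i^-$. Suppose that each $L_i$ contains a boundary edge $e_i$ of $\Delta$, and that $e_1,e_2,e_3$ appear in this clockwise order along the boundary of $\Delta$. Then for every convex set $K$ that meets all three edges $e_1,e_2,e_3$, and every point $p\in K\cap L_1^+\cap L_2^-\cap L_3^-$, the segment connecting the point $L_2\cap L_3$ to $p$ crosses $L_1$ at a point of the interval $K\cap L_1$. *)

theory Defs
  imports "HOL-Analysis.Analysis"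
begin

definition line_of :: "real^2 \<Rightarrow> real \<Rightarrow> (real^2) set" where
  "line_of a b = {x. a \<bullet> x = b}"

definition lower_half :: "real^2 \<Rightarrow> real \<Rightarrow> (real^2) set" where
  "lower_half a b = {x. a \<bullet> x < b}"

definition upper_half :: "real^2 \<Rightarrow> real \<Rightarrow> (real^2) set" where
  "upper_half a b = {x. a \<bullet> x > b}"

text \<open>2D cross product (determinant); positive means counterclockwise.\<close>
definition cross2 :: "real^2 \<Rightarrow> real^2 \<Rightarrow> real" where
  "cross2 u v = u$1 * v$2 - u$2 * v$1"

text \<open>A (closed) boundary edge of the cell D lying on the line L: the part of
  the boundary of D on L, required to be one-dimensional (more than one point).\<close>
definition boundary_edge :: "(real^2) set \<Rightarrow> (real^2) set \<Rightarrow> (real^2) set \<Rightarrow> bool" where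
  "boundary_edge D L e \<longleftrightarrow> e = frontier D \<inter> L \<and> (\<exists>x y. x \<in> e \<and> y \<in> e \<and> x \<noteq> y)"

text \<open>The edges e1, e2, e3 appear in this clockwise order along the boundary of D:
  there is a simple arc in the boundary of D, traversed clockwise (i.e. turning
  clockwise around a point of D), which meets e1, then e2, then e3.\<close>
definition clockwise_along_boundary ::
  "(real^2) set \<Rightarrow> (real^2) set \<Rightarrow> (real^2) set \<Rightarrow> (real^2) set \<Rightarrow> bool" where
  "clockwise_along_boundary D e1 e2 e3 \<longleftrightarrow>
     (\<exists>\<gamma> t1 t2 t3 c.
        path \<gamma> \<and> inj_on \<gamma> {0..1} \<and> path_image \<gamma> \<subseteq> frontier D \<and>
        0 \<le> t1 \<and> t1 < t2 \<and> t2 < t3 \<and> t3 \<le> 1 \<and>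
        \<gamma> t1 \<in> e1 \<and> \<gamma> t2 \<in> e2 \<and> \<gamma> t3 \<in> e3 \<and>
        c \<in> D \<and>
        (\<forall>t\<in>{0..<1}. \<forall>\<^sub>F s in at_right t. cross2 (\<gamma> t - c) (\<gamma> s - c) < 0))"

end

theory Submission
  imports Defs
begin


lemma inner2: "(a::real^2) \<bullet> x = a$1 * x$1 + a$2 * x$2"
  by (simp add: inner_vec_def sum_2)

lemma vec2_eqI: "(x::real^2)$1 = y$1 \<Longrightarrow> x$2 = y$2 \<Longrightarrow> x = y"
  by (simp add: vec_eq_iff forall_2)

lemma inj2:
  fixes a2 a3 x y :: "real^2"
  assumes "cross2 a2 a3 \<noteq> 0" "a2 \<bullet> x = a2 \<bullet> y" "a3 \<bullet> x = a3 \<bullet> y"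
  shows "x = y"
proof -
  have e1: "cross2 a2 a3 * (x$1 - y$1) = a3$2 * (a2 \<bullet> x - a2 \<bullet> y) - a2$2 * (a3 \<bullet> x - a3 \<bullet> y)"
    by (simp add: inner2 cross2_def algebra_simps)
  have e2: "cross2 a2 a3 * (x$2 - y$2) = a2$1 * (a3 \<bullet> x - a3 \<bullet> y) - a3$1 * (a2 \<bullet> x - a2 \<bullet> y)"
    by (simp add: inner2 cross2_def algebra_simps)
  show ?thesis using e1 e2 assms by (intro vec2_eqI) auto
qed

lemma dec2:
  fixes a1 a2 a3 x :: "real^2"
  assumes "cross2 a2 a3 \<noteq> 0"
  shows "a1 \<bullet> x = (cross2 a1 a3 / cross2 a2 a3) * (a2 \<bullet> x) + (cross2 a2 a1 / cross2 a2 a3) * (a3 \<bullet> x)"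
proof -
  have "cross2 a2 a3 * (a1 \<bullet> x) = cross2 a1 a3 * (a2 \<bullet> x) + cross2 a2 a1 * (a3 \<bullet> x)"
    by (simp add: inner2 cross2_def algebra_simps)
  then show ?thesis using assms by (simp add: field_simps)
qed

lemma cross_nz:
  fixes a2 a3 q :: "real^2"
  assumes "a2 \<noteq> 0" "line_of a2 b2 \<inter> line_of a3 b3 = {q}"
  shows "cross2 a2 a3 \<noteq> 0"
proof
  assume c: "cross2 a2 a3 = 0"
  define d :: "real^2" where "d = vector [- a2$2, a2$1]"
  have d1: "d$1 = - a2$2" "d$2 = a2$1" by (simp_all add: d_def)
  have "d \<noteq> 0"
  proof
    assume "d = 0" then have "a2$1 = 0" "a2$2 = 0" using d1 by auto
    then have "a2 = 0" by (intro vec2_eqI) auto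
    then show False using assms by simp
  qed
  have q: "a2 \<bullet> q = b2" "a3 \<bullet> q = b3" using assms(2) by (auto simp: line_of_def)
  have "a2 \<bullet> d = 0" "a3 \<bullet> d = 0" using c by (simp_all add: inner2 d1 cross2_def algebra_simps)
  then have "q + d \<in> line_of a2 b2 \<inter> line_of a3 b3" using q by (simp add: line_of_def inner_add_right)
  then show False using assms(2) \<open>d \<noteq> 0\<close> by auto
qed

lemma core_inj:
  fixes l2 l3 bb u v uu vv :: real
  assumes "l2>0" "l3>0" "u\<ge>0" "v\<ge>0" "uu\<ge>0" "vv\<ge>0" "l2 * u+l3 * v \<ge> bb" "l2 * uu+l3 * vv \<ge> bb"
  "u = 0 \<or> v = 0 \<or> l2 * u+l3 * v = bb" "uu=0 \<or> vv=0 \<or> l2 * uu+l3 * vv=bb" "u - v = uu - vv"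
 shows "u = uu \<and> v = vv"
  using assms(9,10)
proof (elim disjE)
  assume "u = 0" "uu = 0" then show ?thesis using assms by simp
next
  assume "u = 0" "vv = 0" then show ?thesis using assms by simp
next
  assume a: "u = 0" "l2 * uu+l3 * vv = bb"
  have "l3 * v \<ge> bb" using assms a by simp
  have "l3 * v = l3 * (vv - uu)" using assms a by (simp add: algebra_simps)
  then have "(l2+l3) * uu \<le> 0" using a \<open>l3 * v \<ge> bb\<close> by (simp add: algebra_simps)
  then have "uu = 0" using assms by (smt (verit) mult_pos_pos mult_nonneg_nonneg)
  then show ?thesis using assms a by simp
next
  assume "v = 0" "uu = 0" then show ?thesis using assms by simp
next
  assume "v = 0" "vv = 0" then show ?thesis using assms by simp
next
  assume a: "v = 0" "l2 * uu+l3 * vv = bb"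
  have "l2 * u \<ge> bb" using assms a by simp
  have "u = uu - vv" using assms a by simp
  then have "l2 * u = l2 * (uu - vv)" by simp
  then have "(l2+l3) * vv \<le> 0" using a \<open>l2 * u \<ge> bb\<close> by (simp add: algebra_simps)
  then have "vv = 0" using assms by (smt (verit) mult_pos_pos mult_nonneg_nonneg)
  then show ?thesis using assms a by simp
next
  assume a: "uu = 0" "l2 * u+l3 * v = bb"
  have "l3 * vv \<ge> bb" using assms a by simp
  have "vv = v - u" using assms a by simp
  then have "l3 * vv = l3 * (v - u)" by simp
  then have "(l2+l3) * u \<le> 0" using a \<open>l3 * vv \<ge> bb\<close> by (simp add: algebra_simps)
  then have "u = 0" using assms by (smt (verit) mult_pos_pos mult_nonneg_nonneg)
  then show ?thesis using assms a by simp
next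
  assume a: "vv = 0" "l2 * u+l3 * v = bb"
  have "l2 * uu \<ge> bb" using assms a by simp
  have "uu = u - v" using assms a by simp
  then have "l2 * uu = l2 * (u - v)" by simp
  then have "(l2+l3) * v \<le> 0" using a \<open>l2 * uu \<ge> bb\<close> by (simp add: algebra_simps)
  then have "v = 0" using assms by (smt (verit) mult_pos_pos mult_nonneg_nonneg)
  then show ?thesis using assms a by simp
next
  assume a: "l2 * u+l3 * v = bb" "l2 * uu+l3 * vv = bb"
  have "l2 * (u - uu) + l3 * (v - vv) = 0" using a by (simp add: algebra_simps)
  moreover have "v - vv = u - uu" using assms by simp
  ultimately have "(l2+l3) * (u-uu) = 0" by (simp add: algebra_simps)
  then have "u = uu" using assms by simp
  then show ?thesis using assms by simp
qed

lemma no_bad: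
  fixes g :: "real \<Rightarrow> real"
  assumes "continuous_on {0..1} g" "inj_on g {0..1}" "0 \<le> t1" "t1<t2" "t2<t3" "t3 \<le> 1"
    "g t2 \<le> g t1" "g t2 \<le> g t3"
  shows False
proof -
  have ne1: "g t2 \<noteq> g t1" "g t2 \<noteq> g t3" using assms(2-6) unfolding inj_on_def by force+
  define m where "m = min (g t1) (g t3)"
  have c1: "continuous_on {t1..t2} g" "continuous_on {t2..t3} g"
    using assms(1,3-6) by (auto intro: continuous_on_subset)
  obtain s where s: "t1 \<le> s" "s \<le> t2" "g s = m"
    using IVT2'[of g t2 m t1, OF _ _ _ c1(1)] assms ne1 by (auto simp: m_def)
  obtain s' where s': "t2 \<le> s'" "s' \<le> t3" "g s' = m"
    using IVT'[of g t2 m t3, OF _ _ _ c1(2)] assms ne1 by (auto simp: m_def)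
  have "s \<noteq> s'" using s s' assms ne1 by (auto simp: m_def)
  moreover have "s \<in> {0..1}" "s' \<in> {0..1}" using s s' assms(3-6) by auto
  then have "s = s'" using inj_onD[OF assms(2)] s s' by simp
  ultimately show False by simp
qed


lemma ord1:
  fixes l2 l3 bb u1 v1 v2 :: real
  assumes "l3 > 0" "l2 > 0" "u1 \<ge> 0" "l2 * u1 + l3 * v1 = bb" "l3 * v2 \<ge> bb"
  shows "- v2 \<le> u1 - v1"
proof -
  have "l3 * (u1 - v1 + v2) = l3 * u1 + l2 * u1 - bb + l3 * v2 - (l2 * u1 + l3 * v1 - bb)"
    by (simp add: algebra_simps)
  also have "\<dots> = (l2 + l3) * u1 + (l3 * v2 - bb)" using assms(4) by (simp add: algebra_simps)
  also have "\<dots> \<ge> 0" using assms by (intro add_nonneg_nonneg mult_nonneg_nonneg) auto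
  finally have "l3 * (u1 - v1 + v2) \<ge> 0" .
  then have "u1 - v1 + v2 \<ge> 0" using assms(1) by (simp add: zero_le_mult_iff)
  then show ?thesis by simp
qed

theorem mainTheorem2:
  fixes a1 a2 a3 :: "real^2" and b1 b2 b3 :: real
    and D e1 e2 e3 K :: "(real^2) set" and p q :: "real^2"
  assumes nz: "a1 \<noteq> 0" "a2 \<noteq> 0" "a3 \<noteq> 0"
    and distinct: "line_of a1 b1 \<noteq> line_of a2 b2" "line_of a1 b1 \<noteq> line_of a3 b3"
                  "line_of a2 b2 \<noteq> line_of a3 b3"
    and cell: "D \<in> components (- (line_of a1 b1 \<union> line_of a2 b2 \<union> line_of a3 b3))"
    and side: "D \<subseteq> lower_half a1 b1" "D \<subseteq> lower_half a2 b2" "D \<subseteq> lower_half a3 b3"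
    and edges: "boundary_edge D (line_of a1 b1) e1" "boundary_edge D (line_of a2 b2) e2"
               "boundary_edge D (line_of a3 b3) e3"
    and order: "clockwise_along_boundary D e1 e2 e3"
    and q: "line_of a2 b2 \<inter> line_of a3 b3 = {q}"
    and K: "convex K" "K \<inter> e1 \<noteq> {}" "K \<inter> e2 \<noteq> {}" "K \<inter> e3 \<noteq> {}"
    and p: "p \<in> K" "p \<in> upper_half a1 b1" "p \<in> lower_half a2 b2" "p \<in> lower_half a3 b3"
  shows "\<exists>c. closed_segment q p \<inter> line_of a1 b1 = {c} \<and> c \<in> K"
proof -
  have qq: "a2 \<bullet> q = b2" "a3 \<bullet> q = b3" using q by (auto simp: line_of_def)
  have cz: "cross2 a2 a3 \<noteq> 0" using cross_nz[OF nz(2) q] .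
  define l2 where "l2 = cross2 a1 a3 / cross2 a2 a3"
  define l3 where "l3 = cross2 a2 a1 / cross2 a2 a3"
  have dec: "\<And>x. a1 \<bullet> x = l2 * (a2 \<bullet> x) + l3 * (a3 \<bullet> x)"
    unfolding l2_def l3_def by (rule dec2[OF cz])
  define bb where "bb = a1 \<bullet> q - b1"
  have a1q: "a1 \<bullet> q = l2 * b2 + l3 * b3" using dec[of q] qq by simp
  have aff: "a1 \<bullet> x - b1 = bb - l2 * (b2 - a2 \<bullet> x) - l3 * (b3 - a3 \<bullet> x)" for x
    unfolding bb_def a1q dec[of x] by (simp add: algebra_simps)
  have inj: "\<And>x y. a2 \<bullet> x = a2 \<bullet> y \<Longrightarrow> a3 \<bullet> x = a3 \<bullet> y \<Longrightarrow> x = y"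
    using inj2[OF cz] by blast
  have opn: "open (- (line_of a1 b1 \<union> line_of a2 b2 \<union> line_of a3 b3))"
    by (intro open_Compl closed_Un) (simp_all add: line_of_def closed_hyperplane)
  have Dopen: "open D" using open_components[OF opn cell] .
  define C where "C = lower_half a1 b1 \<inter> lower_half a2 b2 \<inter> lower_half a3 b3"
  have CD: "C \<subseteq> D"
  proof (rule components_maximal[OF cell])
    show "connected C" unfolding C_def lower_half_def
      by (intro convex_connected convex_Int convex_halfspace_lt)
    show "C \<subseteq> - (line_of a1 b1 \<union> line_of a2 b2 \<union> line_of a3 b3)"
      by (auto simp: C_def lower_half_def line_of_def)
    show "D \<inter> C \<noteq> {}" using in_components_nonempty[OF cell] side by (auto simp: C_def)
  qed
  have clD: "closure D \<subseteq> {x. a1 \<bullet> x \<le> b1 \<and> a2 \<bullet> x \<le> b2 \<and> a3 \<bullet> x \<le> b3}"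
  proof (rule closure_minimal)
    show "D \<subseteq> {x. a1 \<bullet> x \<le> b1 \<and> a2 \<bullet> x \<le> b2 \<and> a3 \<bullet> x \<le> b3}"
      using side by (force simp: lower_half_def)
    show "closed {x. a1 \<bullet> x \<le> b1 \<and> a2 \<bullet> x \<le> b2 \<and> a3 \<bullet> x \<le> b3}"
      by (intro closed_Collect_conj closed_halfspace_le)
  qed
  have fr: "a1 \<bullet> x \<le> b1 \<and> a2 \<bullet> x \<le> b2 \<and> a3 \<bullet> x \<le> b3 \<and> (a1 \<bullet> x = b1 \<or> a2 \<bullet> x = b2 \<or> a3 \<bullet> x = b3)"
    if x: "x \<in> frontier D" for x
  proof -
    have "x \<in> closure D" using x by (simp add: frontier_def)
    hence le: "a1 \<bullet> x \<le> b1 \<and> a2 \<bullet> x \<le> b2 \<and> a3 \<bullet> x \<le> b3" using clD by auto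
    have "x \<notin> D" using x Dopen by (simp add: frontier_def interior_open)
    hence "x \<notin> C" using CD by auto
    then show ?thesis using le by (auto simp: C_def lower_half_def)
  qed
  have E: "0 \<le> b2 - a2 \<bullet> x \<and> 0 \<le> b3 - a3 \<bullet> x \<and> l2 * (b2 - a2 \<bullet> x) + l3 * (b3 - a3 \<bullet> x) \<ge> bb"
    if "x \<in> frontier D" for x
    using fr[OF that] aff[of x] by simp
  have e1: "e1 = frontier D \<inter> line_of a1 b1" "\<exists>x y. x \<in> e1 \<and> y \<in> e1 \<and> x \<noteq> y"
    using edges(1) by (auto simp: boundary_edge_def)
  have e2: "e2 = frontier D \<inter> line_of a2 b2" "\<exists>x y. x \<in> e2 \<and> y \<in> e2 \<and> x \<noteq> y"
    using edges(2) by (auto simp: boundary_edge_def)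
  have e3: "e3 = frontier D \<inter> line_of a3 b3" "\<exists>x y. x \<in> e3 \<and> y \<in> e3 \<and> x \<noteq> y"
    using edges(3) by (auto simp: boundary_edge_def)
  have neg: "bb < 0"
  proof (rule ccontr)
    assume "\<not> bb < 0" hence bb0: "bb \<ge> 0" by simp
    obtain y1 y2 where y: "y1 \<in> frontier D" "y2 \<in> frontier D" "a2 \<bullet> y1 = b2" "a2 \<bullet> y2 = b2" "y1 \<noteq> y2"
      using e2 by (auto simp: line_of_def)
    have "b3 - a3 \<bullet> y1 \<noteq> b3 - a3 \<bullet> y2" using inj[of y1 y2] y by auto
    then have "b3 - a3 \<bullet> y1 > 0 \<or> b3 - a3 \<bullet> y2 > 0"
      using conjunct1[OF conjunct2[OF E[OF y(1)]]] conjunct1[OF conjunct2[OF E[OF y(2)]]] by linarith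
    then obtain y where yy: "y \<in> frontier D" "a2 \<bullet> y = b2" "b3 - a3 \<bullet> y > 0"
      using y by blast
    have l3y: "l3 * (b3 - a3 \<bullet> y) \<ge> bb" using E[OF yy(1)] yy by simp
    obtain z1 z2 where z: "z1 \<in> frontier D" "z2 \<in> frontier D" "a3 \<bullet> z1 = b3" "a3 \<bullet> z2 = b3" "z1 \<noteq> z2"
      using e3 by (auto simp: line_of_def)
    have "b2 - a2 \<bullet> z1 \<noteq> b2 - a2 \<bullet> z2" using inj[of z1 z2] z by auto
    then have "b2 - a2 \<bullet> z1 > 0 \<or> b2 - a2 \<bullet> z2 > 0"
      using conjunct1[OF E[OF z(1)]] conjunct1[OF E[OF z(2)]] by linarith
    then obtain z where zz: "z \<in> frontier D" "a3 \<bullet> z = b3" "b2 - a2 \<bullet> z > 0"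
      using z by blast
    have l2z: "l2 * (b2 - a2 \<bullet> z) \<ge> bb" using E[OF zz(1)] zz by simp
    have l3nn: "l3 \<ge> 0"
    proof (rule ccontr)
      assume "\<not> l3 \<ge> 0"
      then have "l3 * (b3 - a3 \<bullet> y) < 0" using yy(3) by (simp add: mult_neg_pos)
      then show False using l3y bb0 by simp
    qed
    have l2nn: "l2 \<ge> 0"
    proof (rule ccontr)
      assume "\<not> l2 \<ge> 0"
      then have "l2 * (b2 - a2 \<bullet> z) < 0" using zz(3) by (simp add: mult_neg_pos)
      then show False using l2z bb0 by simp
    qed
    have l3p: "l3 > 0"
    proof (rule ccontr)
      assume "\<not> l3 > 0" then have l30: "l3 = 0" using l3nn by simp
      then have bbz: "bb = 0" using l3y bb0 by simp
      have l2nz: "l2 \<noteq> 0"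
      proof
        assume "l2 = 0"
        then have "\<And>x. a1 \<bullet> x - b1 = 0" using aff l30 bbz by simp
        then have h: "\<And>x. a1 \<bullet> x = b1" by simp
        have "b1 = 0" using h[of 0] by simp
        then have "a1 \<bullet> a1 = 0" using h[of a1] by simp
        then have "a1 = 0" by simp
        then show False using nz by simp
      qed
      have "line_of a1 b1 = line_of a2 b2"
      proof -
        have "a1 \<bullet> x = b1 \<longleftrightarrow> a2 \<bullet> x = b2" for x
        proof -
          have "a1 \<bullet> x - b1 = - (l2 * (b2 - a2 \<bullet> x))" using aff[of x] l30 bbz by simp
          then have "(a1 \<bullet> x = b1) = (l2 * (b2 - a2 \<bullet> x) = 0)" by linarith
          then show ?thesis using l2nz by auto
        qed
        then show ?thesis by (auto simp: line_of_def)
      qed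
      then show False using distinct(1) by simp
    qed
    have l2p: "l2 > 0"
    proof (rule ccontr)
      assume "\<not> l2 > 0" then have l20: "l2 = 0" using l2nn by simp
      then have bbz: "bb = 0" using l2z bb0 by simp
      have l3nz: "l3 \<noteq> 0" using l3p by simp
      have "line_of a1 b1 = line_of a3 b3"
      proof -
        have "a1 \<bullet> x = b1 \<longleftrightarrow> a3 \<bullet> x = b3" for x
        proof -
          have "a1 \<bullet> x - b1 = - (l3 * (b3 - a3 \<bullet> x))" using aff[of x] l20 bbz by simp
          then have "(a1 \<bullet> x = b1) = (l3 * (b3 - a3 \<bullet> x) = 0)" by linarith
          then show ?thesis using l3nz by auto
        qed
        then show ?thesis by (auto simp: line_of_def)
      qed
      then show False using distinct(2) by simp
    qed
    obtain \<gamma> t1 t2 t3 c where g: "path \<gamma>" "inj_on \<gamma> {0..1}" "path_image \<gamma> \<subseteq> frontier D"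
        "0 \<le> t1" "t1 < t2" "t2 < t3" "t3 \<le> 1" "\<gamma> t1 \<in> e1" "\<gamma> t2 \<in> e2" "\<gamma> t3 \<in> e3"
      using order unfolding clockwise_along_boundary_def by blast
    define G where "G t = (b2 - a2 \<bullet> \<gamma> t) - (b3 - a3 \<bullet> \<gamma> t)" for t
    have cont: "continuous_on {0..1} G"
      unfolding G_def using g(1) unfolding path_def by (intro continuous_intros) auto
    have fr\<gamma>: "\<gamma> t \<in> frontier D" if "t \<in> {0..1}" for t
      using g(3) that unfolding path_image_def by auto
    have injG: "inj_on G {0..1}"
    proof (rule inj_onI)
      fix s s' assume s: "s \<in> {0..1}" "s' \<in> {0..1}" "G s = G s'"
      have F1: "a1 \<bullet> \<gamma> s = b1 \<or> a2 \<bullet> \<gamma> s = b2 \<or> a3 \<bullet> \<gamma> s = b3" using fr[OF fr\<gamma>[OF s(1)]] by simp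
      have F2: "a1 \<bullet> \<gamma> s' = b1 \<or> a2 \<bullet> \<gamma> s' = b2 \<or> a3 \<bullet> \<gamma> s' = b3" using fr[OF fr\<gamma>[OF s(2)]] by simp
      have "b2 - a2 \<bullet> \<gamma> s = b2 - a2 \<bullet> \<gamma> s' \<and> b3 - a3 \<bullet> \<gamma> s = b3 - a3 \<bullet> \<gamma> s'"
      proof (rule core_inj[OF l2p l3p])
        show "b2 - a2 \<bullet> \<gamma> s = 0 \<or> b3 - a3 \<bullet> \<gamma> s = 0 \<or> l2 * (b2 - a2 \<bullet> \<gamma> s) + l3 * (b3 - a3 \<bullet> \<gamma> s) = bb"
          using F1 aff[of "\<gamma> s"] by auto
        show "b2 - a2 \<bullet> \<gamma> s' = 0 \<or> b3 - a3 \<bullet> \<gamma> s' = 0 \<or> l2 * (b2 - a2 \<bullet> \<gamma> s') + l3 * (b3 - a3 \<bullet> \<gamma> s') = bb"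
          using F2 aff[of "\<gamma> s'"] by auto
        show "b2 - a2 \<bullet> \<gamma> s - (b3 - a3 \<bullet> \<gamma> s) = b2 - a2 \<bullet> \<gamma> s' - (b3 - a3 \<bullet> \<gamma> s')"
          using s(3) unfolding G_def .
      qed (use E[OF fr\<gamma>[OF s(1)]] E[OF fr\<gamma>[OF s(2)]] in blast)+
      then have "\<gamma> s = \<gamma> s'" using inj by auto
      then show "s = s'" using g(2) s by (auto dest: inj_onD)
    qed
    have t1: "\<gamma> t1 \<in> frontier D" "a1 \<bullet> \<gamma> t1 = b1" using g(8) e1 by (auto simp: line_of_def)
    have t2: "\<gamma> t2 \<in> frontier D" "a2 \<bullet> \<gamma> t2 = b2" using g(9) e2 by (auto simp: line_of_def)
    have t3: "\<gamma> t3 \<in> frontier D" "a3 \<bullet> \<gamma> t3 = b3" using g(10) e3 by (auto simp: line_of_def)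
    have "G t2 \<le> G t1"
    proof -
      have "- (b3 - a3 \<bullet> \<gamma> t2) \<le> (b2 - a2 \<bullet> \<gamma> t1) - (b3 - a3 \<bullet> \<gamma> t1)"
        by (rule ord1[OF l3p l2p, where bb=bb]) (use E[OF t1(1)] E[OF t2(1)] t2(2) aff[of "\<gamma> t1"] t1(2) in auto)
      then show ?thesis using t2(2) by (simp add: G_def)
    qed
    moreover have "G t2 \<le> G t3" using E[OF t2(1)] E[OF t3(1)] t2(2) t3(2) by (simp add: G_def)
    ultimately show False using no_bad[OF cont injG g(4-7)] by simp
  qed
  obtain x1 where x1: "x1 \<in> K" "x1 \<in> frontier D" "a1 \<bullet> x1 = b1"
    using K(2) e1 by (auto simp: line_of_def)
  obtain x2 where x2: "x2 \<in> K" "x2 \<in> frontier D" "a2 \<bullet> x2 = b2"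
    using K(3) e2 by (auto simp: line_of_def)
  obtain x3 where x3: "x3 \<in> K" "x3 \<in> frontier D" "a3 \<bullet> x3 = b3"
    using K(4) e3 by (auto simp: line_of_def)
  define up where "up = b2 - a2 \<bullet> p"
  define vp where "vp = b3 - a3 \<bullet> p"
  define g1 where "g1 = a1 \<bullet> p - b1"
  have pos: "up > 0" "vp > 0" "g1 > 0" using p
    by (simp_all add: up_def vp_def g1_def lower_half_def upper_half_def)
  define \<sigma> where "\<sigma> x = (b2 - a2 \<bullet> x) * vp - (b3 - a3 \<bullet> x) * up" for x
  have s2: "\<sigma> x2 \<le> 0" using E[OF x2(2)] x2(3) pos by (simp add: \<sigma>_def)
  have s3: "\<sigma> x3 \<ge> 0" using E[OF x3(2)] x3(3) pos by (simp add: \<sigma>_def)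
  define P where "P x \<longleftrightarrow> x \<in> K \<and> a1 \<bullet> x \<le> b1 \<and> a2 \<bullet> x \<le> b2 \<and> a3 \<bullet> x \<le> b3" for x
  have P1: "P x1" "P x2" "P x3" using fr x1 x2 x3 by (auto simp: P_def)
  obtain y z where yz: "P y" "P z" "\<sigma> y \<le> 0" "\<sigma> z \<ge> 0"
  proof (cases "\<sigma> x1 \<ge> 0")
    case True then show ?thesis using that P1 s2 by blast
  next
    case False then show ?thesis using that P1 s3 by force
  qed
  obtain w where w: "P w" "\<sigma> w = 0"
  proof (cases "\<sigma> y = 0")
    case True then show ?thesis using that yz by blast
  next
    case False
    then have sy: "\<sigma> y < 0" using yz by simp
    define s where "s = \<sigma> y / (\<sigma> y - \<sigma> z)"
    have s01: "0 \<le> s" "s \<le> 1" using sy yz(4)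
      by (simp_all add: s_def divide_nonpos_neg divide_le_eq_1)
    define w :: "real^2" where "w = (1-s) *\<^sub>R y + s *\<^sub>R z"
    have lin: "a \<bullet> w = (1-s) * (a \<bullet> y) + s * (a \<bullet> z)" for a :: "real^2"
      by (simp add: w_def inner_add_right)
    have "w \<in> K" using convexD[OF K(1), of y z "1-s" s] yz s01 by (simp add: w_def P_def)
    moreover have "a1 \<bullet> w \<le> b1" "a2 \<bullet> w \<le> b2" "a3 \<bullet> w \<le> b3"
      unfolding lin using yz s01 by (auto simp: P_def intro!: convex_bound_le)
    moreover have "\<sigma> w = (1-s) * \<sigma> y + s * \<sigma> z" by (simp add: \<sigma>_def lin algebra_simps)
    then have "\<sigma> w = 0" using sy yz(4) by (simp add: s_def field_simps)
    ultimately show ?thesis using that by (auto simp: P_def)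
  qed
  define \<mu> where "\<mu> = (b2 - a2 \<bullet> w) / up"
  have \<mu>0: "\<mu> \<ge> 0" using w(1) pos by (simp add: \<mu>_def P_def)
  have vw: "b3 - a3 \<bullet> w = \<mu> * vp" using w(2) pos by (simp add: \<mu>_def \<sigma>_def field_simps)
  have wq: "w = q + \<mu> *\<^sub>R (p - q)"
  proof (rule inj)
    have "a2 \<bullet> (q + \<mu> *\<^sub>R (p - q)) = b2 - \<mu> * up"
      by (simp add: inner_add_right inner_diff_right qq up_def algebra_simps)
    moreover have "\<mu> * up = b2 - a2 \<bullet> w" using pos by (simp add: \<mu>_def)
    ultimately show "a2 \<bullet> w = a2 \<bullet> (q + \<mu> *\<^sub>R (p - q))" by simp
    show "a3 \<bullet> w = a3 \<bullet> (q + \<mu> *\<^sub>R (p - q))" using vw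
      by (simp add: inner_add_right inner_diff_right qq vp_def algebra_simps)
  qed
  have along: "a1 \<bullet> (q + s *\<^sub>R (p - q)) - b1 = bb + s * (g1 - bb)" for s
    by (simp add: inner_add_right inner_diff_right bb_def g1_def algebra_simps)
  define t where "t = - bb / (g1 - bb)"
  have t01: "0 < t" "t < 1" using neg pos by (simp_all add: t_def field_simps)
  have "bb + \<mu> * (g1 - bb) \<le> 0" using along[of \<mu>] wq w(1) by (simp add: P_def)
  then have \<mu>t: "\<mu> \<le> t" using neg pos by (simp add: t_def field_simps)
  define c where "c = q + t *\<^sub>R (p - q)"
  have cL: "a1 \<bullet> c = b1"
  proof -
    have "a1 \<bullet> c - b1 = bb + t * (g1 - bb)" using along[of t] by (simp add: c_def)
    also have "\<dots> = 0" using neg pos by (simp add: t_def field_simps)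
    finally show ?thesis by simp
  qed
  have cseg: "c \<in> closed_segment q p"
    unfolding closed_segment_def using t01
    by (auto intro!: exI[of _ t] simp: c_def algebra_simps)
  have uniq: "x = c" if xseg: "x \<in> closed_segment q p" "a1 \<bullet> x = b1" for x
  proof -
    obtain s where s: "x = (1 - s) *\<^sub>R q + s *\<^sub>R p" using xseg(1) by (auto simp: in_segment)
    have xs: "x = q + s *\<^sub>R (p - q)" using s by (simp add: algebra_simps)
    have "bb + s * (g1 - bb) = 0" using along[of s] xseg(2) xs by simp
    then have "s = t" using neg pos by (simp add: t_def field_simps)
    then show ?thesis using xs c_def by simp
  qed
  have cK: "c \<in> K"
  proof -
    define r where "r = (t - \<mu>) / (1 - \<mu>)"
    have r01: "0 \<le> r" "r \<le> 1" using \<mu>t t01 \<mu>0 by (simp_all add: r_def field_simps)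
    have m1: "1 - \<mu> > 0" using \<mu>t t01 by simp
    have "r * (1 - \<mu>) = t - \<mu>" using m1 by (simp add: r_def)
    then have h: "r - r * \<mu> = t - \<mu>" by (simp add: algebra_simps)
    have "(1-r) * \<mu> + r = t" using h by (simp add: algebra_simps)
    moreover have "(1-r) *\<^sub>R w + r *\<^sub>R p = q + ((1-r) * \<mu> + r) *\<^sub>R (p - q)"
      by (simp add: wq algebra_simps)
    ultimately have "c = (1-r) *\<^sub>R w + r *\<^sub>R p" by (simp add: c_def)
    then show ?thesis using convexD[OF K(1), of w p "1-r" r] w(1) p(1) r01 by (simp add: P_def)
  qed
  have "closed_segment q p \<inter> line_of a1 b1 = {c}"
  proof (intro equalityI subsetI)
    fix x assume "x \<in> closed_segment q p \<inter> line_of a1 b1"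
    then have "x \<in> closed_segment q p" "a1 \<bullet> x = b1" by (auto simp: line_of_def)
    then have "x = c" by (rule uniq)
    then show "x \<in> {c}" by simp
  next
    fix x assume "x \<in> {c}"
    then show "x \<in> closed_segment q p \<inter> line_of a1 b1" using cseg cL by (simp add: line_of_def)
  qed
  then show ?thesis using cK by blast
qed

end
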